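(* Consider the fully observable discrete-time system $x_{t+1}=f(x_t,u_t,d_t)$ with $x\in\mathcal{X}$, $u\in\mathcal{U}$, $d\in\mathcal{D}$, failure set $\mathcal{F}\subseteq\mathcal{X}$, a fallback policy $\pi^{\text{shield}}:\mathcal{X}\to\mathcal{U}$, a horizon $H\ge1$, and a terminal safe set $\Omega\subseteq\mathcal{X}$ with $\Omega\cap\mathcal{F}=\emptyset$ that is robustly invariant under $\pi^{\text{shield}}$ (i.e. $f(x,\pi^{\text{shield}}(x),d)\in\Omega$ for all $x\in\Omega$, $d\in\mathcal{D}$). For $x\in\mathcal{X}$, $u\in\mathcal{U}$ define $\hat{\mathcal{X}}_0=\{x\}$, $\hat{\mathcal{X}}_1=\{f(x,u,d):d\in\mathcal{D}\}$, and $\hat{\mathcal{X}}_{\tau+1}=\{f(\hat x,\pi^{\text{shield}}(\hat x),d):\hat x\in\hat{\mathcal{X}}_\tau,d\in\mathcal{D}\}$ for $\tau\ge1$, and the switch-type filter $$\phi(x,u)=\begin{cases}u, & \hat{\mathcal{X}}_\tau\cap\mathcal{F}=\emptyset\ \forall\tau\in\{0,\dots,H\}\ \text{and}\ \hat{\mathcal{X}}_H\subseteq\Omega,\\ \pi^{\text{shield}}(x), & \text{otherwise.}\end{cases}$$ Then for every task policy $\pi^{\text{task}}:\mathcal{X}\to\mathcal{U}$ and every deployment state $x_0\in\Omega$, the system with inputs $u_t=\phi(x_t,\pi^{\text{task}}(x_t))$ satisfies $x_t\notin\mathcal{F}$ for all $t\ge0$ and all disturbance sequences $d_0,d_1,\dots\in\mathcal{D}$.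 *)

theory Defs
  imports Main
begin

fun reach_set :: "('x \<Rightarrow> 'u \<Rightarrow> 'd \<Rightarrow> 'x) \<Rightarrow> 'd set \<Rightarrow> ('x \<Rightarrow> 'u) \<Rightarrow> 'x \<Rightarrow> 'u \<Rightarrow> nat \<Rightarrow> 'x set" where
  "reach_set f D piS x u 0 = {x}"
| "reach_set f D piS x u (Suc 0) = {f x u d | d. d \<in> D}"
| "reach_set f D piS x u (Suc (Suc tau)) =
     {f y (piS y) d | y d. y \<in> reach_set f D piS x u (Suc tau) \<and> d \<in> D}"

definition switch_filter :: "('x \<Rightarrow> 'u \<Rightarrow> 'd \<Rightarrow> 'x) \<Rightarrow> 'd set \<Rightarrow> 'x set \<Rightarrow> ('x \<Rightarrow> 'u) \<Rightarrow> nat \<Rightarrow> 'x set \<Rightarrow> 'x \<Rightarrow> 'u \<Rightarrow> 'u" where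
  "switch_filter f D F piS H Omega x u =
     (if (\<forall>tau \<in> {0..H}. reach_set f D piS x u tau \<inter> F = {}) \<and> reach_set f D piS x u H \<subseteq> Omega
      then u else piS x)"

fun closed_loop :: "('x \<Rightarrow> 'u \<Rightarrow> 'd \<Rightarrow> 'x) \<Rightarrow> ('x \<Rightarrow> 'u \<Rightarrow> 'u) \<Rightarrow> ('x \<Rightarrow> 'u) \<Rightarrow> 'x \<Rightarrow> (nat \<Rightarrow> 'd) \<Rightarrow> nat \<Rightarrow> 'x" where
  "closed_loop f phi piT x0 d 0 = x0"
| "closed_loop f phi piT x0 d (Suc t) =
     (let xt = closed_loop f phi piT x0 d t in f xt (phi xt (piT xt)) (d t))"

end

theory Submission
  imports Defs
begin

fun safeS :: "('x \<Rightarrow> 'u \<Rightarrow> 'd \<Rightarrow> 'x) \<Rightarrow> 'd set \<Rightarrow> 'x set \<Rightarrow> ('x \<Rightarrow> 'u) \<Rightarrow> 'x set \<Rightarrow> nat \<Rightarrow> 'x set" where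
  "safeS f D F piS Omega 0 = Omega"
| "safeS f D F piS Omega (Suc k) = {x. x \<notin> F \<and> (\<forall>d\<in>D. f x (piS x) d \<in> safeS f D F piS Omega k)}"

lemma safeS_F: "Omega \<inter> F = {} \<Longrightarrow> safeS f D F piS Omega k \<inter> F = {}"
  by (cases k) auto

lemma reach_step: "y \<in> reach_set f D piS x u (Suc n) \<Longrightarrow> d \<in> D \<Longrightarrow>
   f y (piS y) d \<in> reach_set f D piS x u (Suc (Suc n))"
  by auto

lemma backward_reach:
  assumes "\<forall>tau \<in> {0..H}. reach_set f D piS x u tau \<inter> F = {}"
    and "reach_set f D piS x u H \<subseteq> Omega"
  shows "j < H \<Longrightarrow> reach_set f D piS x u (H - j) \<subseteq> safeS f D F piS Omega j"
proof (induction j)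
  case 0
  then show ?case using assms(2) by simp
next
  case (Suc j)
  then have IH: "reach_set f D piS x u (H - j) \<subseteq> safeS f D F piS Omega j" by simp
  obtain n where n: "H - Suc j = Suc n" using Suc.prems by (metis Suc_diff_Suc zero_less_diff)
  have hj: "H - j = Suc (Suc n)" using n Suc.prems by simp
  show ?case
  proof
    fix y assume y: "y \<in> reach_set f D piS x u (H - Suc j)"
    have "y \<notin> F" using assms(1) y by (metis atLeastAtMost_iff diff_le_self disjoint_iff zero_le)
    moreover have "\<forall>d\<in>D. f y (piS y) d \<in> safeS f D F piS Omega j"
      using reach_step[of y f D piS x u n] y n hj IH by auto
    ultimately show "y \<in> safeS f D F piS Omega (Suc j)" by simp
  qed
qed

lemma Omega_safe:
  assumes "Omega \<inter> F = {}" "\<And>x d. x \<in> Omega \<Longrightarrow> d \<in> D \<Longrightarrow> f x (piS x) d \<in> Omega"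
  shows "Omega \<subseteq> safeS f D F piS Omega k"
proof (induction k)
  case 0 then show ?case by simp
next
  case (Suc k) then show ?case using assms by auto
qed

theorem corollary3:
  fixes f :: "'x \<Rightarrow> 'u \<Rightarrow> 'd \<Rightarrow> 'x"
    and X :: "'x set" and U :: "'u set" and D :: "'d set"
    and F Omega :: "'x set" and piS :: "'x \<Rightarrow> 'u" and H :: nat
  assumes f_closed: "\<And>x u d. x \<in> X \<Longrightarrow> u \<in> U \<Longrightarrow> d \<in> D \<Longrightarrow> f x u d \<in> X"
    and piS_range: "\<And>x. x \<in> X \<Longrightarrow> piS x \<in> U"
    and F_sub: "F \<subseteq> X"
    and Omega_sub: "Omega \<subseteq> X"
    and H_pos: "H \<ge> 1"
    and Omega_F: "Omega \<inter> F = {}"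
    and Omega_inv: "\<And>x d. x \<in> Omega \<Longrightarrow> d \<in> D \<Longrightarrow> f x (piS x) d \<in> Omega"
  shows "\<forall>piT x0 d. (\<forall>x \<in> X. piT x \<in> U) \<longrightarrow> x0 \<in> Omega \<longrightarrow> (\<forall>t. d t \<in> D) \<longrightarrow>
           (\<forall>t. closed_loop f (switch_filter f D F piS H Omega) piT x0 d t \<notin> F)"
proof (intro allI impI)
  fix piT x0 and d :: "nat \<Rightarrow> 'd" and t :: nat
  assume x0: "x0 \<in> Omega" and dD: "\<forall>t. d t \<in> D"
  let ?S = "safeS f D F piS Omega"
  let ?x = "closed_loop f (switch_filter f D F piS H Omega) piT x0 d"
  have step: "\<exists>k. y \<in> ?S k \<Longrightarrow> e \<in> D \<Longrightarrow>
      \<exists>k. f y (switch_filter f D F piS H Omega y (piT y)) e \<in> ?S k" for y e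
  proof -
    assume "\<exists>k. y \<in> ?S k" and e: "e \<in> D"
    then obtain k where k: "y \<in> ?S k" by blast
    show ?thesis
    proof (cases "(\<forall>tau \<in> {0..H}. reach_set f D piS y (piT y) tau \<inter> F = {}) \<and> reach_set f D piS y (piT y) H \<subseteq> Omega")
      case True
      then have "reach_set f D piS y (piT y) (H - (H - 1)) \<subseteq> ?S (H - 1)"
        using backward_reach[of H f D piS y "piT y" F Omega "H - 1"] H_pos by auto
      moreover have "H - (H - 1) = Suc 0" using H_pos by simp
      ultimately have "f y (piT y) e \<in> ?S (H - 1)" using e by auto
      then show ?thesis using True by (auto simp: switch_filter_def)
    next
      case False
      then have sf: "switch_filter f D F piS H Omega y (piT y) = piS y" by (auto simp: switch_filter_def)
      show ?thesis
      proof (cases k)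
        case 0
        then show ?thesis using k sf Omega_inv e by (metis safeS.simps(1))
      next
        case (Suc k')
        then show ?thesis using k sf e by auto
      qed
    qed
  qed
  have "\<exists>k. ?x t \<in> ?S k"
  proof (induction t)
    case 0 then show ?case using x0 by (auto intro: exI[of _ 0])
  next
    case (Suc t) then show ?case using step dD by (simp add: Let_def)
  qed
  then show "?x t \<notin> F" using safeS_F[OF Omega_F] by blast
qed

end
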